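(* Let $V$ be real-valued and absolutely continuous on $[0,\pi]$ and let $a\in(0,\pi)$. Then the series $$\sum_{t\in\operatorname{spec}(H_\pi(\pi/2))}\frac{1}{k_\pi(t,t)}\left|\int_0^\pi\xi(x,z)\,\mathcal R_{a\pi}(x)\,\xi(x,t)\,dx\right|$$ converges uniformly on compact subsets of $\mathbb C$.
   Context: $\xi(x,z)$ is the solution of $-\xi''+V\xi=z\xi$, $\xi(0,z)=1$, $\xi'(0,z)=0$. $H_\pi(\pi/2)$ is the selfadjoint operator $-\frac{d^2}{dx^2}+V$ in $L_2(0,\pi)$ with boundary conditions $\varphi'(0)=0=\varphi'(\pi)$; its spectrum is the set of $\lambda$ with $\xi'(\pi,\lambda)=0$. $k_\pi(t,t)=\int_0^\pi\xi(x,t)^2\,dx$ for real $t$. $\mathcal R_{a\pi}(x)=1$ for $x\in[0,a]$ and $\frac{\pi-x}{\pi-a}$ for $x\in(a,\pi]$. *)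

theory Defs
  imports "HOL-Analysis.Analysis"
begin

definition abs_continuous_on :: "real \<Rightarrow> real \<Rightarrow> (real \<Rightarrow> real) \<Rightarrow> bool" where
  "abs_continuous_on l u f \<longleftrightarrow>
     (\<forall>\<epsilon>>0. \<exists>\<delta>>0. \<forall>(n::nat) (a::nat \<Rightarrow> real) (b::nat \<Rightarrow> real).
        (\<forall>i<n. l \<le> a i \<and> a i \<le> b i \<and> b i \<le> u) \<and>
        (\<forall>i j. i < j \<and> j < n \<longrightarrow> b i \<le> a j) \<and>
        (\<Sum>i<n. b i - a i) < \<delta>
        \<longrightarrow> (\<Sum>i<n. \<bar>f (b i) - f (a i)\<bar>) < \<epsilon>)"

definition Rcut :: "real \<Rightarrow> real \<Rightarrow> real" where
  "Rcut a x = (if x \<le> a then 1 else (pi - x) / (pi - a))"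

text \<open>k_pi(t,t) = integral over [0,pi] of xi(x,t)^2, for real t (xi real-valued there).\<close>
definition kpi :: "(real \<Rightarrow> complex \<Rightarrow> complex) \<Rightarrow> real \<Rightarrow> real" where
  "kpi xi t = Re (integral {0..pi} (\<lambda>x. (xi x (complex_of_real t))\<^sup>2))"

text \<open>Spectrum of H_pi(pi/2): real lambda with xi'(pi,lambda) = 0.\<close>
definition spec_H :: "(real \<Rightarrow> complex \<Rightarrow> complex) \<Rightarrow> real set" where
  "spec_H xi' = {t::real. xi' pi (complex_of_real t) = 0}"

end

theory Submission
  imports Defs
begin


lemma two_mul_le: fixes p q :: real shows "2 * \<bar>p * q\<bar> \<le> p\<^sup>2 + q\<^sup>2"
proof -
  have "0 \<le> (\<bar>p\<bar> - \<bar>q\<bar>)\<^sup>2" by simp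
  also have "\<dots> = p\<^sup>2 + q\<^sup>2 - 2 * \<bar>p * q\<bar>" by (simp add: power2_eq_square algebra_simps abs_mult)
  finally show ?thesis by simp
qed
lemma ineq1:
  fixes U D w C p :: real
  assumes "0 \<le> w" "w \<le> 1" "1 \<le> C" "1 \<le> p"
  shows "U\<^sup>2 / p - w * (2 * U * D) \<le> 2 * (D * D + C * U * U)"
proof -
  have a: "U\<^sup>2 / p \<le> U\<^sup>2" using assms by (simp add: divide_le_eq mult_le_cancel_left1)
  have b: "- (w * (2 * U * D)) \<le> 2 * \<bar>U * D\<bar>"
  proof -
    have "\<bar>w * (2 * U * D)\<bar> = w * (2 * \<bar>U * D\<bar>)" using assms by (simp add: abs_mult)
    also have "\<dots> \<le> 1 * (2 * \<bar>U * D\<bar>)" by (rule mult_right_mono) (use assms in auto)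
    finally show ?thesis by linarith
  qed
  have c: "U * U \<le> C * U * U" using mult_right_mono[OF assms(3), of "U*U"] by (simp add: mult.assoc)
  show ?thesis using a b c two_mul_le[of U D] zero_le_square[of D] unfolding power2_eq_square by (smt (verit))
qed

lemma gronwall_ftc:
  fixes E Ed :: "real \<Rightarrow> real" and L x :: real
  assumes der: "\<And>y. y \<in> {0..pi} \<Longrightarrow> (E has_real_derivative Ed y) (at y within {0..pi})"
    and le: "\<And>y. y \<in> {0..pi} \<Longrightarrow> Ed y \<le> L * E y"
    and x: "x \<in> {0..pi}"
  shows "E x \<le> E 0 * exp (L * x)"
proof -
  define h where "h y = E y * exp (- L * y)" for y
  define hd where "hd y = Ed y * exp (- L * y) - L * E y * exp (- L * y)" for y
  have sub: "{0..x} \<subseteq> {0..pi}" using x by auto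
  have "((h has_vector_derivative hd y) (at y within {0..x}))" if "y \<in> {0..x}" for y
  proof -
    have "(h has_real_derivative hd y) (at y within {0..pi})"
      unfolding h_def hd_def
      using der[of y] that sub
      by (auto intro!: derivative_eq_intros simp: algebra_simps)
    then show ?thesis
      using has_field_derivative_subset[OF _ sub]
      by (simp add: has_real_derivative_iff_has_vector_derivative[symmetric] has_field_derivative_subset[OF _ sub])
  qed
  then have "(hd has_integral (h x - h 0)) {0..x}"
    using x by (intro fundamental_theorem_of_calculus) auto
  moreover have "hd y \<le> 0" if "y \<in> {0..x}" for y
  proof -
    have "Ed y \<le> L * E y" using le[of y] that sub by auto
    then have "(Ed y - L * E y) * exp (- L * y) \<le> 0"
      by (simp add: mult_nonpos_nonneg)
    then show ?thesis by (simp add: hd_def algebra_simps)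
  qed
  ultimately have "h x - h 0 \<le> 0"
    using has_integral_le[OF _ has_integral_0] by blast
  then have "E x * exp (- L * x) \<le> E 0" by (simp add: h_def)
  then have "E x * exp (- L * x) * exp (L * x) \<le> E 0 * exp (L * x)"
    by (simp add: mult_right_mono)
  then show ?thesis by (simp add: mult.assoc exp_add[symmetric])
qed

lemma energy:
  fixes w p W :: "real \<Rightarrow> complex" and L x :: real
  assumes dw: "\<And>y. y \<in> {0..pi} \<Longrightarrow> (w has_vector_derivative p y) (at y within {0..pi})"
    and dp: "\<And>y. y \<in> {0..pi} \<Longrightarrow> (p has_vector_derivative W y * w y) (at y within {0..pi})"
    and L: "\<And>y. y \<in> {0..pi} \<Longrightarrow> 1 + cmod (W y) \<le> L"
    and x: "x \<in> {0..pi}"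
  shows "(cmod (w x))\<^sup>2 + (cmod (p x))\<^sup>2 \<le> ((cmod (w 0))\<^sup>2 + (cmod (p 0))\<^sup>2) * exp (L * x)"
proof -
  define E where "E y = (Re (w y))\<^sup>2 + (Im (w y))\<^sup>2 + (Re (p y))\<^sup>2 + (Im (p y))\<^sup>2" for y
  define Ed where "Ed y = 2 * (Re (w y) * Re (p y) + Im (w y) * Im (p y))
     + 2 * (Re (p y) * Re (W y * w y) + Im (p y) * Im (W y * w y))" for y
  have "E x \<le> E 0 * exp (L * x)"
  proof (rule gronwall_ftc[OF _ _ x])
    fix y assume y: "y \<in> {0..pi}"
    have r: "((\<lambda>x. Re (w x)) has_real_derivative Re (p y)) (at y within {0..pi})"
      "((\<lambda>x. Im (w x)) has_real_derivative Im (p y)) (at y within {0..pi})"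
      "((\<lambda>x. Re (p x)) has_real_derivative Re (W y * w y)) (at y within {0..pi})"
      "((\<lambda>x. Im (p x)) has_real_derivative Im (W y * w y)) (at y within {0..pi})"
      using dw[OF y] dp[OF y] unfolding has_vector_derivative_complex_iff by auto
    show "(E has_real_derivative Ed y) (at y within {0..pi})"
      unfolding E_def[abs_def] power2_eq_square
      apply (rule DERIV_cong)
       apply (rule DERIV_add DERIV_mult' r)+
      apply (simp add: Ed_def algebra_simps)
      done
    have e1: "2 * (Re (w y) * Re (p y) + Im (w y) * Im (p y)) \<le> (cmod (w y))\<^sup>2 + (cmod (p y))\<^sup>2"
      unfolding cmod_power2
      using sum_squares_ge_zero[of "Re (w y) - Re (p y)" "Im (w y) - Im (p y)"]
      by (simp add: power2_eq_square algebra_simps)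
    have "Re (p y) * Re (W y * w y) + Im (p y) * Im (W y * w y) = Re (cnj (p y) * (W y * w y))"
      by simp
    also have "\<dots> \<le> cmod (cnj (p y) * (W y * w y))" by (rule complex_Re_le_cmod)
    also have "\<dots> = cmod (W y) * (cmod (p y) * cmod (w y))" by (simp add: norm_mult)
    finally have "2 * (Re (p y) * Re (W y * w y) + Im (p y) * Im (W y * w y))
        \<le> cmod (W y) * (2 * (cmod (p y) * cmod (w y)))" by simp
    also have "\<dots> \<le> cmod (W y) * ((cmod (w y))\<^sup>2 + (cmod (p y))\<^sup>2)"
      apply (rule mult_left_mono)
      using sum_squares_ge_zero[of "cmod (w y) - cmod (p y)" 0]
      by (auto simp: power2_eq_square algebra_simps)
    finally have e2: "2 * (Re (p y) * Re (W y * w y) + Im (p y) * Im (W y * w y))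
        \<le> cmod (W y) * ((cmod (w y))\<^sup>2 + (cmod (p y))\<^sup>2)" .
    have E: "E y = (cmod (w y))\<^sup>2 + (cmod (p y))\<^sup>2" unfolding E_def cmod_power2 by simp
    have "Ed y \<le> (1 + cmod (W y)) * E y" using e1 e2 unfolding Ed_def E by (simp add: algebra_simps)
    also have "\<dots> \<le> L * E y" apply (rule mult_right_mono) using L[OF y] by (auto simp: E_def)
    finally show "Ed y \<le> L * E y" .
  qed
  then show ?thesis unfolding E_def cmod_power2 by (simp add: add.assoc)
qed



locale setting =
  fixes V :: "real \<Rightarrow> real" and a M :: real and xi xi' :: "real \<Rightarrow> complex \<Rightarrow> complex"
  assumes contV: "continuous_on {0..pi} V"
    and Mb: "\<And>x. x \<in> {0..pi} \<Longrightarrow> \<bar>V x\<bar> \<le> M"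
    and a: "0 < a" "a < pi"
    and xi_deriv: "\<And>z x. x \<in> {0..pi} \<Longrightarrow>
            ((\<lambda>y. xi y z) has_vector_derivative xi' x z) (at x within {0..pi})"
    and xi'_deriv: "\<And>z x. x \<in> {0..pi} \<Longrightarrow>
            ((\<lambda>y. xi' y z) has_vector_derivative ((complex_of_real (V x) - z) * xi x z))
              (at x within {0..pi})"
    and xi_init: "\<And>z. xi 0 z = 1" "\<And>z. xi' 0 z = 0"
begin

definition "c = M + 1"
definition "X t y = Re (xi y (complex_of_real t))"
definition "Xd t y = Re (xi' y (complex_of_real t))"
definition "k t = integral {0..pi} (\<lambda>y. (X t y)\<^sup>2)"

lemma M_nonneg: "0 \<le> M" using Mb[of 0] by auto

lemma xi_bound:
  assumes x: "x \<in> {0..pi}"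
  shows "(cmod (xi x z))\<^sup>2 + (cmod (xi' x z))\<^sup>2 \<le> exp ((1 + M + cmod z) * pi)"
proof -
  have "(cmod (xi x z))\<^sup>2 + (cmod (xi' x z))\<^sup>2 \<le> ((cmod (xi 0 z))\<^sup>2 + (cmod (xi' 0 z))\<^sup>2) * exp ((1 + M + cmod z) * x)"
  proof (rule energy[where W = "\<lambda>y. complex_of_real (V y) - z", OF xi_deriv xi'_deriv _ x])
    fix y :: real assume y: "y \<in> {0..pi}"
    have "cmod (complex_of_real (V y) - z) \<le> cmod (complex_of_real (V y)) + cmod z" by (rule norm_triangle_ineq4)
    then show "1 + cmod (complex_of_real (V y) - z) \<le> 1 + M + cmod z" using Mb[OF y] by simp
  qed
  also have "\<dots> = exp ((1 + M + cmod z) * x)" by (simp add: xi_init)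
  also have "\<dots> \<le> exp ((1 + M + cmod z) * pi)"
    using x M_nonneg by (auto intro!: mult_left_mono)
  finally show ?thesis .
qed

lemma xi_real:
  assumes x: "x \<in> {0..pi}"
  shows "xi x (complex_of_real t) = complex_of_real (X t x)"
proof -
  let ?z = "complex_of_real t"
  have "(cmod (xi x ?z - cnj (xi x ?z)))\<^sup>2 + (cmod (xi' x ?z - cnj (xi' x ?z)))\<^sup>2
     \<le> ((cmod (xi 0 ?z - cnj (xi 0 ?z)))\<^sup>2 + (cmod (xi' 0 ?z - cnj (xi' 0 ?z)))\<^sup>2) * exp ((1 + M + \<bar>t\<bar>) * x)"
  proof (rule energy[where W = "\<lambda>y. complex_of_real (V y) - ?z", OF _ _ _ x])
    fix y :: real assume y: "y \<in> {0..pi}"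
    show "((\<lambda>y. xi y ?z - cnj (xi y ?z)) has_vector_derivative xi' y ?z - cnj (xi' y ?z)) (at y within {0..pi})"
      by (intro derivative_intros xi_deriv y)
    have "((\<lambda>y. xi' y ?z - cnj (xi' y ?z)) has_vector_derivative
        (complex_of_real (V y) - ?z) * xi y ?z - cnj ((complex_of_real (V y) - ?z) * xi y ?z)) (at y within {0..pi})"
      by (intro derivative_intros xi'_deriv y)
    then show "((\<lambda>y. xi' y ?z - cnj (xi' y ?z)) has_vector_derivative
        (complex_of_real (V y) - ?z) * (xi y ?z - cnj (xi y ?z))) (at y within {0..pi})"
      by (simp add: algebra_simps)
    have "cmod (complex_of_real (V y) - ?z) \<le> cmod (complex_of_real (V y)) + cmod ?z" by (rule norm_triangle_ineq4)
    then show "1 + cmod (complex_of_real (V y) - ?z) \<le> 1 + M + \<bar>t\<bar>" using Mb[OF y] by simp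
  qed
  also have "\<dots> = 0" by (simp add: xi_init)
  finally have "cmod (xi x ?z - cnj (xi x ?z)) = 0"
    by (smt (verit) zero_le_power2 power2_eq_square mult_eq_0_iff norm_ge_zero)
  then have "xi x ?z = cnj (xi x ?z)" by simp
  then have "Im (xi x ?z) = 0" by (metis cnj.simps(2) neg_equal_zero)
  then show ?thesis unfolding X_def by (simp add: complex_eq_iff)
qed

lemma X_deriv: "y \<in> {0..pi} \<Longrightarrow> (X t has_real_derivative Xd t y) (at y within {0..pi})"
  using xi_deriv[of y "complex_of_real t"] unfolding X_def[abs_def] Xd_def has_vector_derivative_complex_iff
  by auto

lemma Xd_deriv: "y \<in> {0..pi} \<Longrightarrow> (Xd t has_real_derivative (V y - t) * X t y) (at y within {0..pi})"
  using xi'_deriv[of y "complex_of_real t"] unfolding X_def Xd_def[abs_def] has_vector_derivative_complex_iff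
  by auto

lemma X0: "X t 0 = 1" and Xd0: "Xd t 0 = 0"
  by (auto simp: X_def Xd_def xi_init)

lemma cont_X: "continuous_on {0..pi} (X t)"
  using X_deriv by (rule DERIV_continuous_on)
lemma cont_Xd: "continuous_on {0..pi} (Xd t)"
  using Xd_deriv by (rule DERIV_continuous_on)

lemma cont_xi: "continuous_on {0..pi} (\<lambda>y. xi y z)"
  unfolding continuous_on_eq_continuous_within
  using xi_deriv has_vector_derivative_continuous by blast
lemma cont_xi': "continuous_on {0..pi} (\<lambda>y. xi' y z)"
  unfolding continuous_on_eq_continuous_within
  using xi'_deriv has_vector_derivative_continuous by blast

lemma kpi_eq: "kpi xi t = k t"
proof -
  have int: "(\<lambda>y. (xi y (complex_of_real t))\<^sup>2) integrable_on {0..pi}"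
    by (intro integrable_continuous_interval continuous_intros cont_xi)
  have "((\<lambda>y. Re ((xi y (complex_of_real t))\<^sup>2)) has_integral kpi xi t) {0..pi}"
    unfolding kpi_def by (rule has_integral_Re[OF integrable_integral[OF int]])
  then have "((\<lambda>y. (X t y)\<^sup>2) has_integral kpi xi t) {0..pi}"
    by (rule has_integral_eq[rotated]) (auto simp: xi_real)
  then show ?thesis unfolding k_def by (rule integral_unique[symmetric])
qed

end


context setting begin

lemma X_deriv_at: "y \<in> {0<..<pi} \<Longrightarrow> (X s has_real_derivative Xd s y) (at y)"
  using X_deriv[of y s] by (simp add: at_within_Icc_at)

lemma Xd_deriv_at: "y \<in> {0<..<pi} \<Longrightarrow> (Xd s has_real_derivative (V y - s) * X s y) (at y)"
  using Xd_deriv[of y s] by (simp add: at_within_Icc_at)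

lemma byparts:
  assumes Xdpi: "Xd t pi = 0"
    and gc: "continuous_on {0..pi} g" and T: "finite T"
    and gd: "\<And>y. y \<in> {0<..<pi} - T \<Longrightarrow> (g has_real_derivative gd y) (at y)"
  shows "((\<lambda>y. gd y * Xd t y + g y * ((V y - t) * X t y)) has_integral 0) {0..pi}"
proof -
  have "((\<lambda>y. gd y * Xd t y + g y * ((V y - t) * X t y)) has_integral (g pi * Xd t pi - g 0 * Xd t 0)) {0..pi}"
  proof (rule fundamental_theorem_of_calculus_interior_strong[OF T])
    show "0 \<le> pi" by simp
    fix y assume y: "y \<in> {0<..<pi} - T"
    have "((\<lambda>y. g y * Xd t y) has_real_derivative gd y * Xd t y + g y * ((V y - t) * X t y)) (at y)"
      using DERIV_mult'[OF gd[OF y] Xd_deriv_at[of y t]] y by (simp add: algebra_simps)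
    then show "((\<lambda>y. g y * Xd t y) has_vector_derivative gd y * Xd t y + g y * ((V y - t) * X t y)) (at y)"
      by (simp add: has_real_derivative_iff_has_vector_derivative)
  next
    show "continuous_on {0..pi} (\<lambda>y. g y * Xd t y)"
      by (intro continuous_intros gc cont_Xd)
  qed
  then show ?thesis using Xdpi by (simp add: Xd0)
qed

lemma Qid:
  assumes Xdpi: "Xd t pi = 0"
    and gc: "continuous_on {0..pi} g" and T: "finite T"
    and gd: "\<And>y. y \<in> {0<..<pi} - T \<Longrightarrow> (g has_real_derivative gd y) (at y)"
  shows "((\<lambda>y. gd y * Xd t y + (V y + c) * g y * X t y) has_integral
           ((t + c) * integral {0..pi} (\<lambda>y. g y * X t y))) {0..pi}"
proof -
  have i: "(\<lambda>y. g y * X t y) integrable_on {0..pi}"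
    by (intro integrable_continuous_interval continuous_intros gc cont_X)
  have "((\<lambda>y. (gd y * Xd t y + g y * ((V y - t) * X t y)) + (t + c) * (g y * X t y)) has_integral
           (0 + (t + c) * integral {0..pi} (\<lambda>y. g y * X t y))) {0..pi}"
    by (intro has_integral_add byparts[OF assms] has_integral_mult_right integrable_integral i)
  then show ?thesis unfolding add_0_left
    by (rule has_integral_eq[rotated]) (simp add: algebra_simps)
qed

lemma Qss:
  assumes "Xd t pi = 0"
  shows "((\<lambda>y. Xd s y * Xd t y + (V y + c) * X s y * X t y) has_integral
           ((t + c) * integral {0..pi} (\<lambda>y. X s y * X t y))) {0..pi}"
  by (rule Qid[OF assms cont_X finite.emptyI]) (auto intro: X_deriv_at)

lemma orth:
  assumes "Xd s pi = 0" "Xd t pi = 0" "s \<noteq> t"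
  shows "integral {0..pi} (\<lambda>y. X s y * X t y) = 0"
proof -
  have "(t + c) * integral {0..pi} (\<lambda>y. X s y * X t y) = (s + c) * integral {0..pi} (\<lambda>y. X t y * X s y)"
    using has_integral_unique[OF Qss[OF assms(2), of s] has_integral_eq[OF _ Qss[OF assms(1), of t]]]
    by (simp add: algebra_simps)
  also have "integral {0..pi} (\<lambda>y. X t y * X s y) = integral {0..pi} (\<lambda>y. X s y * X t y)"
    by (simp add: mult.commute)
  finally show ?thesis using assms(3) by (simp add: algebra_simps)
qed

lemma k_pos: "0 < k t"
proof -
  have c: "continuous_on {0..pi} (\<lambda>y. (X t y)\<^sup>2)" by (intro continuous_intros cont_X)
  have "k t \<ge> 0" unfolding k_def
    by (intro integral_nonneg integrable_continuous_interval c) auto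
  moreover have "k t \<noteq> 0"
  proof
    assume "k t = 0"
    then have "\<forall>x\<in>{0..pi}. (X t x)\<^sup>2 = 0" unfolding k_def
      using integral_eq_0_iff[OF c] by simp
    then show False using X0[of t] by auto
  qed
  ultimately show ?thesis by simp
qed

lemma tc:
  assumes "Xd t pi = 0"
  shows "1 \<le> t + c"
proof -
  have "k t \<le> (t + c) * k t"
  proof -
    have "((\<lambda>y. (X t y)\<^sup>2) has_integral k t) {0..pi}" unfolding k_def
      by (intro integrable_integral integrable_continuous_interval continuous_intros cont_X)
    moreover have "((\<lambda>y. Xd t y * Xd t y + (V y + c) * X t y * X t y) has_integral ((t + c) * k t)) {0..pi}"
      using Qss[OF assms, of t] by (simp add: k_def power2_eq_square)
    moreover have "(X t y)\<^sup>2 \<le> Xd t y * Xd t y + (V y + c) * X t y * X t y" if "y \<in> {0..pi}" for y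
    proof -
      have "1 \<le> V y + c" using Mb[OF that] by (auto simp: c_def)
      then have "1 * (X t y)\<^sup>2 \<le> (V y + c) * (X t y)\<^sup>2" by (intro mult_right_mono) auto
      moreover have "0 \<le> Xd t y * Xd t y" by simp
      moreover have "(V y + c) * X t y * X t y = (V y + c) * (X t y)\<^sup>2" by (simp add: power2_eq_square mult.assoc)
      ultimately show ?thesis by linarith
    qed
    ultimately show ?thesis by (rule has_integral_le)
  qed
  then show ?thesis using k_pos[of t] by simp
qed

end


context setting begin

definition "u w F y = (\<Sum>t\<in>F. w t * X t y)"
definition "ud w F y = (\<Sum>t\<in>F. w t * Xd t y)"

lemma u_deriv: "y \<in> {0..pi} \<Longrightarrow> (u w F has_real_derivative ud w F y) (at y within {0..pi})"
  unfolding u_def[abs_def] ud_def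
  by (intro DERIV_sum DERIV_cmult X_deriv)

lemma u_deriv_at: "y \<in> {0<..<pi} \<Longrightarrow> (u w F has_real_derivative ud w F y) (at y)"
  using u_deriv[of y w F] by (simp add: at_within_Icc_at)

lemma cont_u: "continuous_on {0..pi} (u w F)"
  using u_deriv by (rule DERIV_continuous_on)

lemma cont_ud: "continuous_on {0..pi} (ud w F)"
  unfolding ud_def[abs_def] by (intro continuous_intros cont_Xd)

lemma QgU:
  assumes F: "finite F" "\<And>t. t \<in> F \<Longrightarrow> Xd t pi = 0"
    and gc: "continuous_on {0..pi} g" and T: "finite T"
    and gd: "\<And>y. y \<in> {0<..<pi} - T \<Longrightarrow> (g has_real_derivative gd y) (at y)"
  shows "((\<lambda>y. gd y * ud w F y + (V y + c) * g y * u w F y) has_integral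
           (\<Sum>t\<in>F. w t * ((t + c) * integral {0..pi} (\<lambda>y. g y * X t y)))) {0..pi}"
proof -
  have "((\<lambda>y. \<Sum>t\<in>F. w t * (gd y * Xd t y + (V y + c) * g y * X t y)) has_integral
           (\<Sum>t\<in>F. w t * ((t + c) * integral {0..pi} (\<lambda>y. g y * X t y)))) {0..pi}"
    by (intro has_integral_sum F has_integral_mult_right Qid[OF F(2) gc T gd])
  then show ?thesis
    by (rule has_integral_eq[rotated])
       (simp add: u_def ud_def sum_distrib_left sum.distrib algebra_simps)
qed

lemma intuX:
  assumes F: "finite F" "\<And>t. t \<in> F \<Longrightarrow> Xd t pi = 0" and s: "s \<in> F"
  shows "integral {0..pi} (\<lambda>y. u w F y * X s y) = w s * k s"
proof -
  have "((\<lambda>y. \<Sum>t\<in>F. w t * (X t y * X s y)) has_integral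
           (\<Sum>t\<in>F. w t * integral {0..pi} (\<lambda>y. X t y * X s y))) {0..pi}"
    by (intro has_integral_sum F has_integral_mult_right integrable_integral
         integrable_continuous_interval continuous_intros cont_X)
  then have "integral {0..pi} (\<lambda>y. u w F y * X s y) = (\<Sum>t\<in>F. w t * integral {0..pi} (\<lambda>y. X t y * X s y))"
    by (intro integral_unique) (simp add: u_def sum_distrib_right mult.assoc)
  also have "\<dots> = (\<Sum>t\<in>F. if t = s then w s * k s else 0)"
    by (rule sum.cong) (auto simp: orth F s k_def power2_eq_square)
  also have "\<dots> = w s * k s" using F s by simp
  finally show ?thesis .
qed

lemma QuU:
  assumes F: "finite F" "\<And>t. t \<in> F \<Longrightarrow> Xd t pi = 0"
  shows "((\<lambda>y. ud w F y * ud w F y + (V y + c) * u w F y * u w F y) has_integral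
           (\<Sum>t\<in>F. (t + c) * (w t)\<^sup>2 * k t)) {0..pi}"
proof -
  have "((\<lambda>y. ud w F y * ud w F y + (V y + c) * u w F y * u w F y) has_integral
           (\<Sum>t\<in>F. w t * ((t + c) * integral {0..pi} (\<lambda>y. u w F y * X t y)))) {0..pi}"
    by (rule QgU[OF F cont_u finite.emptyI]) (auto intro: u_deriv_at)
  also have "(\<Sum>t\<in>F. w t * ((t + c) * integral {0..pi} (\<lambda>y. u w F y * X t y))) = (\<Sum>t\<in>F. (t + c) * (w t)\<^sup>2 * k t)"
    by (rule sum.cong) (auto simp: intuX[OF F] power2_eq_square)
  finally show ?thesis .
qed

lemma sobolev:
  assumes F: "finite F"
  assumes Q: "((\<lambda>y. ud w F y * ud w F y + (V y + c) * u w F y * u w F y) has_integral Quu) {0..pi}"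
  shows "(u w F 0)\<^sup>2 \<le> 2 * Quu"
proof -
  let ?u = "u w F" and ?ud = "ud w F"
  have "((\<lambda>y. - ((?u y)\<^sup>2 / pi) + (pi - y) / pi * (2 * ?u y * ?ud y)) has_integral
          ((pi - pi) / pi * (?u pi)\<^sup>2 - (pi - 0) / pi * (?u 0)\<^sup>2)) {0..pi}"
  proof (rule fundamental_theorem_of_calculus)
    fix y :: real assume y: "y \<in> {0..pi}"
    have "((\<lambda>y. (pi - y) / pi * (?u y)\<^sup>2) has_real_derivative
          (- 1 / pi) * (?u y)\<^sup>2 + (pi - y) / pi * (2 * ?u y * ?ud y)) (at y within {0..pi})"
      using u_deriv[OF y, of w F]
      by (auto intro!: derivative_eq_intros simp: field_simps)
    then show "((\<lambda>y. (pi - y) / pi * (?u y)\<^sup>2) has_vector_derivative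
          - ((?u y)\<^sup>2 / pi) + (pi - y) / pi * (2 * ?u y * ?ud y)) (at y within {0..pi})"
      by (simp add: has_real_derivative_iff_has_vector_derivative)
  qed simp
  from has_integral_neg[OF this]
  have h: "((\<lambda>y. - (- ((?u y)\<^sup>2 / pi) + (pi - y) / pi * (2 * ?u y * ?ud y))) has_integral (?u 0)\<^sup>2) {0..pi}"
    by simp
  have I: "((\<lambda>y. (?u y)\<^sup>2 / pi - (pi - y) / pi * (2 * ?u y * ?ud y)) has_integral (?u 0)\<^sup>2) {0..pi}"
    by (rule has_integral_eq[OF _ h]) simp
  have Q2: "((\<lambda>y. 2 * (?ud y * ?ud y + (V y + c) * ?u y * ?u y)) has_integral 2 * Quu) {0..pi}"
    using has_integral_mult_right[OF Q, of 2] by simp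
  show ?thesis
  proof (rule has_integral_le[OF I Q2])
    fix y :: real assume y: "y \<in> {0..pi}"
    have w01: "0 \<le> (pi - y) / pi" "(pi - y) / pi \<le> 1" using y by (auto simp: field_simps)
    have "1 \<le> V y + c" using Mb[OF y] by (auto simp: c_def)
    then show "(?u y)\<^sup>2 / pi - (pi - y) / pi * (2 * ?u y * ?ud y) \<le> 2 * (?ud y * ?ud y + (V y + c) * ?u y * ?u y)"
      using w01 pi_gt3 by (intro ineq1) auto
  qed
qed

lemma bessel1:
  assumes F: "finite F" "\<And>t. t \<in> F \<Longrightarrow> Xd t pi = 0"
  shows "(\<Sum>t\<in>F. 1 / (k t * (t + c))) \<le> 2"
proof -
  define w where "w t = 1 / (k t * (t + c))" for t
  have pos: "t \<in> F \<Longrightarrow> 0 < k t * (t + c)" for t using k_pos[of t] tc[OF F(2)[of t]] by simp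
  have "(\<Sum>t\<in>F. (t + c) * (w t)\<^sup>2 * k t) = (\<Sum>t\<in>F. w t)"
  proof (rule sum.cong[OF refl])
    fix t assume t: "t \<in> F"
    have "w t * (k t * (t + c)) = 1" using k_pos[of t] tc[OF F(2)[OF t]] by (simp add: w_def)
    have "(t + c) * (w t)\<^sup>2 * k t = w t * (w t * (k t * (t + c)))" by (simp add: power2_eq_square algebra_simps)
    also have "\<dots> = w t * 1" by (simp only: \<open>w t * (k t * (t + c)) = 1\<close>)
    finally show "(t + c) * (w t)\<^sup>2 * k t = w t" by simp
  qed
  then have "((\<lambda>y. ud w F y * ud w F y + (V y + c) * u w F y * u w F y) has_integral (\<Sum>t\<in>F. w t)) {0..pi}"
    using QuU[OF F, of w] by simp
  from sobolev[OF F(1) this] have "(\<Sum>t\<in>F. w t)\<^sup>2 \<le> 2 * (\<Sum>t\<in>F. w t)"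
    by (simp add: u_def X0)
  moreover have "0 \<le> (\<Sum>t\<in>F. w t)" using pos by (auto intro!: sum_nonneg simp: w_def less_imp_le)
  ultimately have "(\<Sum>t\<in>F. w t) \<le> 2"
  proof (rule_tac ccontr)
    assume sq: "(\<Sum>t\<in>F. w t)\<^sup>2 \<le> 2 * (\<Sum>t\<in>F. w t)" and "\<not> (\<Sum>t\<in>F. w t) \<le> 2"
    then have "2 * (\<Sum>t\<in>F. w t) < (\<Sum>t\<in>F. w t) * (\<Sum>t\<in>F. w t)"
      using mult_strict_right_mono[of 2 "(\<Sum>t\<in>F. w t)" "(\<Sum>t\<in>F. w t)"] by auto
    then show False using sq by (simp add: power2_eq_square)
  qed
  then show ?thesis by (simp add: w_def)
qed

end


lemma sq_diff_le: fixes x y :: real shows "(x - y)\<^sup>2 \<le> 2 * x\<^sup>2 + 2 * y\<^sup>2"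
  using sum_squares_ge_zero[of "x + y" 0] by (simp add: power2_eq_square algebra_simps)

context setting begin

lemma Rcut_min: "Rcut a x = min 1 ((pi - x) / (pi - a))"
  using a by (auto simp: Rcut_def min_def field_simps)

lemma cont_Rcut: "continuous_on S (Rcut a)"
  unfolding Rcut_min[abs_def] by (intro continuous_intros) (use a in auto)

lemma Rcut_01: "x \<in> {0..pi} \<Longrightarrow> 0 \<le> Rcut a x \<and> Rcut a x \<le> 1"
  using a by (auto simp: Rcut_def field_simps)

lemma pw_integrable:
  fixes A B :: "real \<Rightarrow> real"
  assumes "continuous_on {0..pi} A" "continuous_on {0..pi} B"
  shows "(\<lambda>y. if y \<le> a then A y else B y) integrable_on {0..pi}"
proof -
  have "continuous_on {0..a} A" using continuous_on_subset[OF assms(1), of "{0..a}"] a by auto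
  then have "A integrable_on {0..a}" by (rule integrable_continuous_interval)
  then have i1: "(\<lambda>y. if y \<le> a then A y else B y) integrable_on {0..a}"
    by (rule integrable_eq) auto
  have "continuous_on {a..pi} B" using continuous_on_subset[OF assms(2), of "{a..pi}"] a by auto
  then have hB: "B integrable_on {a..pi}" by (rule integrable_continuous_interval)
  have i2: "(\<lambda>y. if y \<le> a then A y else B y) integrable_on {a..pi}"
    by (rule integrable_spike_finite[of "{a}" "{a..pi}" _ B]) (auto intro: hB)
  show ?thesis
    by (rule Henstock_Kurzweil_Integration.integrable_combine[OF _ _ i1 i2]) (use a in auto)
qed

lemma bessel2:
  fixes F Fd :: "real \<Rightarrow> real" and B :: real
  assumes Fder: "\<And>y. y \<in> {0..pi} \<Longrightarrow> (F has_real_derivative Fd y) (at y within {0..pi})"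
    and cFd: "continuous_on {0..pi} Fd"
    and FB: "\<And>y. y \<in> {0..pi} \<Longrightarrow> (F y)\<^sup>2 \<le> B \<and> (Fd y)\<^sup>2 \<le> B"
    and G: "finite G" "\<And>t. t \<in> G \<Longrightarrow> Xd t pi = 0"
  shows "(\<Sum>t\<in>G. (t + c) * (integral {0..pi} (\<lambda>y. Rcut a y * F y * X t y))\<^sup>2 / k t)
          \<le> pi * (2 * B / (pi - a)\<^sup>2 + 2 * B + (M + c) * B)"
proof -
  define f where "f y = Rcut a y * F y" for y
  define fd where "fd y = (if y \<le> a then Fd y else (Fd y * (pi - y) - F y) / (pi - a))" for y
  define p where "p t = integral {0..pi} (\<lambda>y. f y * X t y)" for t
  define w where "w t = p t / k t" for t
  define A where "A = (\<Sum>t\<in>G. (t + c) * (p t)\<^sup>2 / k t)"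
  have cF: "continuous_on {0..pi} F" using Fder by (rule DERIV_continuous_on)
  have cf: "continuous_on {0..pi} f" unfolding f_def[abs_def] by (intro continuous_intros cont_Rcut cF)
  have fder: "(f has_real_derivative fd y) (at y)" if y: "y \<in> {0<..<pi} - {a}" for y
  proof (cases "y < a")
    case True
    have "(F has_real_derivative Fd y) (at y)" using Fder[of y] y by (simp add: at_within_Icc_at)
    then have "(f has_real_derivative Fd y) (at y)"
      by (rule has_field_derivative_transform_within_open[of _ _ _ "{..<a}"])
         (use True in \<open>auto simp: f_def Rcut_def\<close>)
    then show ?thesis using True by (simp add: fd_def)
  next
    case False
    then have ya: "a < y" using y by auto
    have dF: "(F has_real_derivative Fd y) (at y)" using Fder[of y] y by (simp add: at_within_Icc_at)
    have dR: "((\<lambda>z. (pi - z) / (pi - a)) has_real_derivative -1 / (pi - a)) (at y)"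
    proof -
      have "((\<lambda>z. pi - z) has_real_derivative -1) (at y)" by (auto intro!: derivative_eq_intros)
      from DERIV_cdivide[OF this, of "pi - a"] show ?thesis by simp
    qed
    have "((\<lambda>z. (pi - z) / (pi - a) * F z) has_real_derivative (-1 / (pi - a)) * F y + (pi - y) / (pi - a) * Fd y) (at y)"
      by (rule DERIV_cong[OF DERIV_mult'[OF dR dF]]) (simp add: algebra_simps)
    then have "(f has_real_derivative (-1 / (pi - a)) * F y + (pi - y) / (pi - a) * Fd y) (at y)"
      by (rule has_field_derivative_transform_within_open[of _ _ _ "{a<..}"])
         (use ya in \<open>auto simp: f_def Rcut_def\<close>)
    moreover have "(-1 / (pi - a)) * F y + (pi - y) / (pi - a) * Fd y = fd y"
      using ya by (simp add: fd_def diff_divide_distrib add_divide_distrib algebra_simps)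
    ultimately show ?thesis by simp
  qed
  have pos: "t \<in> G \<Longrightarrow> 0 < k t \<and> 0 < t + c" for t using k_pos[of t] tc[OF G(2)[of t]] by simp
  have "((\<lambda>y. fd y * ud w G y + (V y + c) * f y * u w G y) has_integral
           (\<Sum>t\<in>G. w t * ((t + c) * integral {0..pi} (\<lambda>y. f y * X t y)))) {0..pi}"
    by (rule QgU[OF G cf finite.insertI[OF finite.emptyI] fder])
  also have "(\<Sum>t\<in>G. w t * ((t + c) * integral {0..pi} (\<lambda>y. f y * X t y))) = A"
    unfolding A_def by (rule sum.cong) (use pos in \<open>auto simp: w_def p_def power2_eq_square\<close>)
  finally have Ifu: "((\<lambda>y. fd y * ud w G y + (V y + c) * f y * u w G y) has_integral A) {0..pi}" .
  have "(\<Sum>t\<in>G. (t + c) * (w t)\<^sup>2 * k t) = A"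
    unfolding A_def by (rule sum.cong) (use pos in \<open>auto simp: w_def power2_eq_square\<close>)
  then have Iuu: "((\<lambda>y. ud w G y * ud w G y + (V y + c) * u w G y * u w G y) has_integral A) {0..pi}"
    using QuU[OF G, of w] by simp
  have fdfd: "(\<lambda>y. fd y * fd y) integrable_on {0..pi}"
  proof -
    have "(\<lambda>y. if y \<le> a then Fd y * Fd y else ((Fd y * (pi - y) - F y) / (pi - a)) * ((Fd y * (pi - y) - F y) / (pi - a))) integrable_on {0..pi}"
      using a by (intro pw_integrable continuous_intros cFd cF) auto
    then show ?thesis by (rule integrable_eq) (auto simp: fd_def)
  qed
  define Qff where "Qff = integral {0..pi} (\<lambda>y. fd y * fd y + (V y + c) * f y * f y)"
  have Iff: "((\<lambda>y. fd y * fd y + (V y + c) * f y * f y) has_integral Qff) {0..pi}"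
    unfolding Qff_def
    by (intro integrable_integral integrable_add fdfd integrable_continuous_interval continuous_intros cf contV)
  have "0 \<le> Qff - 2 * A + A"
  proof (rule has_integral_nonneg)
    show "((\<lambda>y. (fd y * fd y + (V y + c) * f y * f y) - 2 * (fd y * ud w G y + (V y + c) * f y * u w G y)
             + (ud w G y * ud w G y + (V y + c) * u w G y * u w G y)) has_integral Qff - 2 * A + A) {0..pi}"
      by (intro has_integral_add has_integral_diff has_integral_mult_right Iff Ifu Iuu)
    fix y :: real assume y: "y \<in> {0..pi}"
    have "0 \<le> V y + c" using Mb[OF y] by (auto simp: c_def)
    then have "0 \<le> (fd y - ud w G y)\<^sup>2 + (V y + c) * (f y - u w G y)\<^sup>2" by simp
    then show "0 \<le> (fd y * fd y + (V y + c) * f y * f y) - 2 * (fd y * ud w G y + (V y + c) * f y * u w G y)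
             + (ud w G y * ud w G y + (V y + c) * u w G y * u w G y)"
      by (simp add: power2_eq_square algebra_simps)
  qed
  then have AQ: "A \<le> Qff" by simp
  have Ic: "((\<lambda>y. 2 * B / (pi - a)\<^sup>2 + 2 * B + (M + c) * B) has_integral pi * (2 * B / (pi - a)\<^sup>2 + 2 * B + (M + c) * B)) {0..pi}"
    using has_integral_const_real[of "2 * B / (pi - a)\<^sup>2 + 2 * B + (M + c) * B" 0 pi] by simp
  have "Qff \<le> pi * (2 * B / (pi - a)\<^sup>2 + 2 * B + (M + c) * B)"
  proof (rule has_integral_le[OF Iff Ic])
    fix y :: real assume y: "y \<in> {0..pi}"
    have FB1: "(F y)\<^sup>2 \<le> B" and FB2: "(Fd y)\<^sup>2 \<le> B" using FB[OF y] by auto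
    have B0: "0 \<le> B" using FB1 by (meson order.trans zero_le_power2)
    have pa: "0 < pi - a" using a by simp
    have h1: "fd y * fd y \<le> 2 * B / (pi - a)\<^sup>2 + 2 * B"
    proof (cases "y \<le> a")
      case True
      have "0 \<le> 2 * B / (pi - a)\<^sup>2" using B0 by simp
      moreover have "fd y * fd y = (Fd y)\<^sup>2" using True by (simp add: fd_def power2_eq_square)
      ultimately show ?thesis using FB2 B0 by linarith
    next
      case False
      have "fd y * fd y = (Fd y * (pi - y) - F y)\<^sup>2 / (pi - a)\<^sup>2"
        using False by (simp add: fd_def power2_eq_square)
      also have "\<dots> \<le> (2 * (Fd y * (pi - y))\<^sup>2 + 2 * (F y)\<^sup>2) / (pi - a)\<^sup>2"
        by (intro divide_right_mono sq_diff_le) simp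
      also have "(Fd y * (pi - y))\<^sup>2 \<le> B * (pi - a)\<^sup>2"
      proof -
        have "(pi - y)\<^sup>2 \<le> (pi - a)\<^sup>2" using False y by (intro power_mono) auto
        then show ?thesis unfolding power_mult_distrib
          by (intro mult_mono FB2) (auto simp: B0)
      qed
      then have "(2 * (Fd y * (pi - y))\<^sup>2 + 2 * (F y)\<^sup>2) / (pi - a)\<^sup>2 \<le> (2 * (B * (pi - a)\<^sup>2) + 2 * B) / (pi - a)\<^sup>2"
        using FB1 by (intro divide_right_mono) auto
      also have "\<dots> = 2 * B / (pi - a)\<^sup>2 + 2 * B" using pa by (simp add: field_simps)
      finally show ?thesis .
    qed
    have "f y * f y \<le> B"
    proof -
      have "f y * f y = (Rcut a y)\<^sup>2 * (F y)\<^sup>2" by (simp add: f_def power2_eq_square)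
      also have "\<dots> \<le> 1 * B" using Rcut_01[OF y] FB1 by (intro mult_mono) (auto simp: power_le_one)
      finally show ?thesis by simp
    qed
    moreover have "0 \<le> V y + c" "V y + c \<le> M + c" using Mb[OF y] by (auto simp: c_def)
    ultimately have h2: "(V y + c) * f y * f y \<le> (M + c) * B"
      by (metis mult.assoc mult_mono zero_le_square order.trans)
    show "fd y * fd y + (V y + c) * f y * f y \<le> 2 * B / (pi - a)\<^sup>2 + 2 * B + (M + c) * B"
      using h1 h2 by linarith
  qed
  then show ?thesis using AQ unfolding A_def p_def f_def by (simp add: mult.assoc)
qed

end


lemma tail_small:
  fixes b :: "real \<Rightarrow> real" and S :: "real set"
  assumes b0: "\<And>t. t \<in> S \<Longrightarrow> 0 \<le> b t"
    and bb: "\<And>H. finite H \<Longrightarrow> H \<subseteq> S \<Longrightarrow> sum b H \<le> Bb"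
    and eta: "0 < eta"
  shows "\<exists>F0. finite F0 \<and> F0 \<subseteq> S \<and> (\<forall>H. finite H \<and> H \<subseteq> S \<and> H \<inter> F0 = {} \<longrightarrow> sum b H < eta)"
proof -
  define Xs where "Xs = sum b ` {H. finite H \<and> H \<subseteq> S}"
  have ne: "Xs \<noteq> {}" unfolding Xs_def by auto
  have bdd: "bdd_above Xs" unfolding Xs_def using bb by (auto intro!: bdd_aboveI2)
  have "Sup Xs - eta < Sup Xs" using eta by simp
  then obtain x where "x \<in> Xs" "Sup Xs - eta < x" using less_cSup_iff[OF ne bdd] by blast
  then obtain F0 where F0: "finite F0" "F0 \<subseteq> S" "Sup Xs - eta < sum b F0" unfolding Xs_def by auto
  show ?thesis
  proof (intro exI conjI allI impI)
    fix H assume H: "finite H \<and> H \<subseteq> S \<and> H \<inter> F0 = {}"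
    have "sum b (F0 \<union> H) \<in> Xs" unfolding Xs_def using F0 H by auto
    then have "sum b (F0 \<union> H) \<le> Sup Xs" using bdd by (rule cSup_upper)
    moreover have "sum b (F0 \<union> H) = sum b F0 + sum b H" using F0 H by (intro sum.union_disjoint) auto
    ultimately show "sum b H < eta" using F0 by linarith
  qed (use F0 in auto)
qed

lemma amgm2: fixes x y T :: real
  assumes "0 \<le> x" "0 \<le> y" "0 \<le> T" "T\<^sup>2 \<le> x * y"
  shows "2 * T \<le> x + y"
proof -
  have "(2 * T)\<^sup>2 \<le> (x + y)\<^sup>2"
    using assms(4) sum_squares_ge_zero[of "x - y" 0] by (simp add: power2_eq_square algebra_simps)
  then show ?thesis by (rule power2_le_imp_le) (use assms in simp)
qed

lemma unif_from_bounds: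
  fixes tm :: "complex \<Rightarrow> real \<Rightarrow> real" and aa :: "complex \<Rightarrow> real \<Rightarrow> real" and b :: "real \<Rightarrow> real"
    and S :: "real set" and K :: "complex set"
  assumes tm0: "\<And>z t. z \<in> K \<Longrightarrow> t \<in> S \<Longrightarrow> 0 \<le> tm z t"
    and b0: "\<And>t. t \<in> S \<Longrightarrow> 0 \<le> b t"
    and aa0: "\<And>z t. z \<in> K \<Longrightarrow> t \<in> S \<Longrightarrow> 0 \<le> aa z t"
    and tmle: "\<And>z t d. z \<in> K \<Longrightarrow> t \<in> S \<Longrightarrow> 0 < d \<Longrightarrow> 2 * tm z t \<le> d * aa z t + b t / d"
    and ab: "\<And>z H. z \<in> K \<Longrightarrow> finite H \<Longrightarrow> H \<subseteq> S \<Longrightarrow> sum (aa z) H \<le> P"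
    and bb: "\<And>H. finite H \<Longrightarrow> H \<subseteq> S \<Longrightarrow> sum b H \<le> Bb"
  shows "\<exists>g. uniform_limit K (\<lambda>F z. \<Sum>t\<in>F. tm z t) g (finite_subsets_at_top S)"
proof -
  have sumle: "2 * sum (tm z) H \<le> d * max P 0 + sum b H / d"
    if z: "z \<in> K" and H: "finite H" "H \<subseteq> S" and d: "0 < d" for z H d
  proof -
    have "2 * sum (tm z) H = (\<Sum>t\<in>H. 2 * tm z t)" by (simp add: sum_distrib_left)
    also have "\<dots> \<le> (\<Sum>t\<in>H. d * aa z t + b t / d)" using H z d by (intro sum_mono tmle) auto
    also have "\<dots> = d * sum (aa z) H + sum b H / d" by (simp add: sum.distrib sum_distrib_left sum_divide_distrib)
    also have "\<dots> \<le> d * max P 0 + sum b H / d"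
      using mult_left_mono[of "sum (aa z) H" "max P 0" d] ab[OF z H] d by simp
    finally show ?thesis .
  qed
  define g where "g z = Sup ((\<lambda>H. sum (tm z) H) ` {H. finite H \<and> H \<subseteq> S})" for z
  have bdd: "bdd_above ((\<lambda>H. sum (tm z) H) ` {H. finite H \<and> H \<subseteq> S})" if z: "z \<in> K" for z
  proof (rule bdd_aboveI2)
    fix H assume "H \<in> {H. finite H \<and> H \<subseteq> S}"
    then have H: "finite H" "H \<subseteq> S" by auto
    from sumle[OF z H, of 1] bb[OF H] show "sum (tm z) H \<le> (max P 0 + Bb) / 2" by simp
  qed
  have upper: "sum (tm z) Y \<le> g z" if "z \<in> K" "finite Y" "Y \<subseteq> S" for z Y
    unfolding g_def using that by (intro cSup_upper bdd) auto
  have "uniform_limit K (\<lambda>F z. \<Sum>t\<in>F. tm z t) g (finite_subsets_at_top S)"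
    unfolding uniform_limit_iff
  proof (intro allI impI)
    fix e :: real assume e: "0 < e"
    define P' where "P' = max P 0"
    have P0: "0 \<le> P'" by (simp add: P'_def)
    define d where "d = e / (2 * (P' + 1))"
    have d: "0 < d" using e P0 by (simp add: d_def)
    have dP: "d * max P 0 < e / 2"
    proof -
      have "d * max P 0 = e * P' / (2 * (P' + 1))" by (simp add: d_def P'_def)
      also have "\<dots> < e / 2" using e P0 by (simp add: field_simps)
      finally show ?thesis .
    qed
    have ed: "0 < e * d / 2" using e d by simp
    from tail_small[OF b0 bb ed] obtain F0 where F0all: "finite F0 \<and> F0 \<subseteq> S \<and>
       (\<forall>H. finite H \<and> H \<subseteq> S \<and> H \<inter> F0 = {} \<longrightarrow> sum b H < e * d / 2)"
      by (rule exE)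
    have F0: "finite F0" "F0 \<subseteq> S" using F0all by (rule conjunct1, metis conjunct1 conjunct2)
    have tail0: "\<forall>H. finite H \<and> H \<subseteq> S \<and> H \<inter> F0 = {} \<longrightarrow> sum b H < e * d / 2"
      using F0all by (metis conjunct2)
    have tail: "sum b H < e * d / 2" if "finite H" "H \<subseteq> S" "H \<inter> F0 = {}" for H
      using tail0 that by blast
    have small: "sum (tm z) H < e / 2" if z: "z \<in> K" and H: "finite H" "H \<subseteq> S" "H \<inter> F0 = {}" for z H
    proof -
      have "sum b H / d < e / 2" using tail[OF H] d by (simp add: field_simps)
      then show ?thesis using sumle[OF z H(1,2) d] dP by linarith
    qed
    show "\<forall>\<^sub>F F in finite_subsets_at_top S. \<forall>z\<in>K. dist (\<Sum>t\<in>F. tm z t) (g z) < e"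
      unfolding eventually_finite_subsets_at_top
    proof (rule exI[of _ F0], intro conjI allI impI ballI)
      fix Y z assume Y: "finite Y \<and> F0 \<subseteq> Y \<and> Y \<subseteq> S" and z: "z \<in> K"
      have le1: "sum (tm z) Y \<le> g z" using upper z Y by auto
      have "g z \<le> sum (tm z) Y + e / 2"
        unfolding g_def
      proof (rule cSup_least)
        show "(\<lambda>H. sum (tm z) H) ` {H. finite H \<and> H \<subseteq> S} \<noteq> {}" by auto
        fix x assume "x \<in> (\<lambda>H. sum (tm z) H) ` {H. finite H \<and> H \<subseteq> S}"
        then obtain H where H: "finite H" "H \<subseteq> S" and x: "x = sum (tm z) H" by auto
        have "sum (tm z) H \<le> sum (tm z) (Y \<union> (H - Y))"
          using H Y z tm0 by (intro sum_mono2) auto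
        also have "\<dots> = sum (tm z) Y + sum (tm z) (H - Y)"
          using H Y by (intro sum.union_disjoint) auto
        also have "sum (tm z) (H - Y) < e / 2"
          using H Y z by (intro small) auto
        finally show "x \<le> sum (tm z) Y + e / 2" using x by simp
      qed
      then show "dist (\<Sum>t\<in>Y. tm z t) (g z) < e" using le1 e by (simp add: dist_real_def)
    qed (use F0 in auto)
  qed
  then show ?thesis by blast
qed



lemma ac_cont:
  assumes "abs_continuous_on 0 pi V"
  shows "continuous_on {0..pi} V"
  unfolding continuous_on_iff
proof (intro ballI allI impI)
  fix x e :: real assume x: "x \<in> {0..pi}" and e: "0 < e"
  from assms[unfolded abs_continuous_on_def, rule_format, OF e]
  obtain d where d: "0 < d" and H: "\<forall>(n::nat) (aa::nat \<Rightarrow> real) (bb::nat \<Rightarrow> real). (\<forall>i<n. 0 \<le> aa i \<and> aa i \<le> bb i \<and> bb i \<le> pi) \<and>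
        (\<forall>i j. i < j \<and> j < n \<longrightarrow> bb i \<le> aa j) \<and> (\<Sum>i<n. bb i - aa i) < d
        \<longrightarrow> (\<Sum>i<n. \<bar>V (bb i) - V (aa i)\<bar>) < e"
    by (elim exE conjE)
  show "\<exists>d>0. \<forall>x'\<in>{0..pi}. dist x' x < d \<longrightarrow> dist (V x') (V x) < e"
  proof (rule exI[of _ d], intro conjI ballI impI)
    fix x' assume x': "x' \<in> {0..pi}" and dx: "dist x' x < d"
    have pre: "(\<forall>i<1. 0 \<le> min x x' \<and> min x x' \<le> max x x' \<and> max x x' \<le> pi) \<and>
        (\<forall>i j. i < j \<and> j < (1::nat) \<longrightarrow> max x x' \<le> min x x') \<and> (\<Sum>i<(1::nat). max x x' - min x x') < d"
      using x x' dx by (auto simp: dist_real_def)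
    have "(\<Sum>i<(1::nat). \<bar>V (max x x') - V (min x x')\<bar>) < e"
      using H[rule_format, of 1 "\<lambda>_. min x x'" "\<lambda>_. max x x'", OF pre] by simp
    then have "\<bar>V (max x x') - V (min x x')\<bar> < e" by simp
    then show "dist (V x') (V x) < e"
      by (cases "x \<le> x'") (auto simp: dist_real_def max_def min_def abs_minus_commute)
  qed (rule d)
qed



lemma helper_cancel: fixes s Q kk :: real assumes "kk \<noteq> 0" "s \<noteq> 0"
  shows "s * Q / kk * (1 / (kk * s)) = Q / kk\<^sup>2"
  using assms by (simp add: power2_eq_square)

theorem proposition3p5:
  fixes V :: "real \<Rightarrow> real" and a :: real
    and xi xi' :: "real \<Rightarrow> complex \<Rightarrow> complex"
  assumes V_ac: "abs_continuous_on 0 pi V"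
    and a: "0 < a" "a < pi"
    and xi_deriv: "\<And>z x. x \<in> {0..pi} \<Longrightarrow>
            ((\<lambda>y. xi y z) has_vector_derivative xi' x z) (at x within {0..pi})"
    and xi'_deriv: "\<And>z x. x \<in> {0..pi} \<Longrightarrow>
            ((\<lambda>y. xi' y z) has_vector_derivative ((complex_of_real (V x) - z) * xi x z))
              (at x within {0..pi})"
    and xi_init: "\<And>z. xi 0 z = 1" "\<And>z. xi' 0 z = 0"
  shows "\<forall>K. compact K \<longrightarrow>
    (\<exists>g. uniform_limit K
       (\<lambda>F z. \<Sum>t\<in>F. (1 / kpi xi t) *
           cmod (integral {0..pi} (\<lambda>x. xi x z * complex_of_real (Rcut a x) * xi x (complex_of_real t))))
       g (finite_subsets_at_top (spec_H xi')))"
proof -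
  have contV: "continuous_on {0..pi} V" by (rule ac_cont[OF V_ac])
  have "bounded (V ` {0..pi})"
    by (intro compact_imp_bounded compact_continuous_image contV compact_Icc)
  then obtain M where M: "\<forall>x\<in>V ` {0..pi}. norm x \<le> M" unfolding bounded_iff by blast
  have Mb: "\<And>x. x \<in> {0..pi} \<Longrightarrow> \<bar>V x\<bar> \<le> M" using M by auto
  interpret setting V a M xi xi'
    by (unfold_locales) (fact contV Mb a xi_deriv xi'_deriv xi_init)+
  show ?thesis
  proof (intro allI impI)
    fix K :: "complex set" assume "compact K"
    then have "bounded K" by (rule compact_imp_bounded)
    then obtain Kb where Kb: "\<forall>z\<in>K. norm z \<le> Kb" unfolding bounded_iff by blast
    define B where "B = exp ((1 + M + Kb) * pi)"
    have xiB: "(cmod (xi y z))\<^sup>2 \<le> B \<and> (cmod (xi' y z))\<^sup>2 \<le> B" if z: "z \<in> K" and y: "y \<in> {0..pi}" for z y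
    proof -
      have "exp ((1 + M + cmod z) * pi) \<le> B"
        unfolding B_def using Kb z by (auto intro!: mult_right_mono)
      then show ?thesis using xi_bound[OF y, of z]
        by (smt (verit) zero_le_power2)
    qed
    define S where "S = spec_H xi'"
    have Sneu: "Xd t pi = 0" if "t \<in> S" for t using that unfolding S_def spec_H_def Xd_def by simp
    define p1 where "p1 z t = integral {0..pi} (\<lambda>y. Rcut a y * Re (xi y z) * X t y)" for z t
    define p2 where "p2 z t = integral {0..pi} (\<lambda>y. Rcut a y * Im (xi y z) * X t y)" for z t
    define tm where "tm z t = (1 / kpi xi t) *
           cmod (integral {0..pi} (\<lambda>x. xi x z * complex_of_real (Rcut a x) * xi x (complex_of_real t)))" for z t
    define aa where "aa z t = (t + c) * ((p1 z t)\<^sup>2 + (p2 z t)\<^sup>2) / k t" for z t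
    define b where "b t = 1 / (k t * (t + c))" for t
    have cm: "(cmod (integral {0..pi} (\<lambda>x. xi x z * complex_of_real (Rcut a x) * xi x (complex_of_real t))))\<^sup>2
        = (p1 z t)\<^sup>2 + (p2 z t)\<^sup>2" for z t
    proof -
      define h where "h x = xi x z * complex_of_real (Rcut a x) * xi x (complex_of_real t)" for x
      have hint: "h integrable_on {0..pi}"
        unfolding h_def[abs_def] by (intro integrable_continuous_interval continuous_intros cont_xi cont_Rcut)
      have "((\<lambda>x. Re (h x)) has_integral Re (integral {0..pi} h)) {0..pi}"
        by (rule has_integral_Re[OF integrable_integral[OF hint]])
      then have "((\<lambda>y. Rcut a y * Re (xi y z) * X t y) has_integral Re (integral {0..pi} h)) {0..pi}"
        by (rule has_integral_eq[rotated]) (simp add: h_def xi_real)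
      then have r: "p1 z t = Re (integral {0..pi} h)" unfolding p1_def by (rule integral_unique)
      have "((\<lambda>x. Im (h x)) has_integral Im (integral {0..pi} h)) {0..pi}"
        by (rule has_integral_Im[OF integrable_integral[OF hint]])
      then have "((\<lambda>y. Rcut a y * Im (xi y z) * X t y) has_integral Im (integral {0..pi} h)) {0..pi}"
        by (rule has_integral_eq[rotated]) (simp add: h_def xi_real)
      then have i: "p2 z t = Im (integral {0..pi} h)" unfolding p2_def by (rule integral_unique)
      show ?thesis unfolding h_def[symmetric] r i cmod_power2 ..
    qed
    have kc: "0 < k t" "1 \<le> t + c" if "t \<in> S" for t using k_pos tc[OF Sneu[OF that]] by auto
    have "\<exists>g. uniform_limit K (\<lambda>F z. \<Sum>t\<in>F. tm z t) g (finite_subsets_at_top S)"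
    proof (rule unif_from_bounds[where aa = aa and b = b])
      fix z t assume z: "z \<in> K" and t: "t \<in> S"
      show "0 \<le> tm z t" using kc[OF t] by (simp add: tm_def kpi_eq)
      show "0 \<le> aa z t" using kc[OF t] by (simp add: aa_def)
      fix d :: real assume d: "0 < d"
      show "2 * tm z t \<le> d * aa z t + b t / d"
      proof (rule amgm2)
        show "0 \<le> d * aa z t" using kc[OF t] d by (simp add: aa_def)
        show "0 \<le> b t / d" using kc[OF t] d by (simp add: b_def)
        show "0 \<le> tm z t" using kc[OF t] by (simp add: tm_def kpi_eq)
        have "(tm z t)\<^sup>2 = ((p1 z t)\<^sup>2 + (p2 z t)\<^sup>2) / (k t)\<^sup>2"
          unfolding tm_def kpi_eq power_mult_distrib cm by (simp add: power_divide)
        also have "\<dots> = aa z t * b t"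
        proof -
          have ne: "k t \<noteq> 0" "t + c \<noteq> 0" using kc[OF t] by auto
          show ?thesis unfolding aa_def b_def using helper_cancel[OF ne] by simp
        qed
        also have "\<dots> = d * aa z t * (b t / d)" using d by simp
        finally show "(tm z t)\<^sup>2 \<le> d * aa z t * (b t / d)" by simp
      qed
    next
      fix t assume t: "t \<in> S"
      show "0 \<le> b t" using kc[OF t] by (simp add: b_def)
    next
      fix z H assume z: "z \<in> K" and H: "finite H" "H \<subseteq> S"
      have HN: "\<And>t. t \<in> H \<Longrightarrow> Xd t pi = 0" using H Sneu by auto
      have Fder: "((\<lambda>y. Re (xi y z)) has_real_derivative Re (xi' y z)) (at y within {0..pi})"
        "((\<lambda>y. Im (xi y z)) has_real_derivative Im (xi' y z)) (at y within {0..pi})"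
        if "y \<in> {0..pi}" for y
        using xi_deriv[OF that, of z] unfolding has_vector_derivative_complex_iff by auto
      have cFd: "continuous_on {0..pi} (\<lambda>y. Re (xi' y z))" "continuous_on {0..pi} (\<lambda>y. Im (xi' y z))"
        by (intro continuous_intros cont_xi')+
      have FB: "(Re (xi y z))\<^sup>2 \<le> B \<and> (Re (xi' y z))\<^sup>2 \<le> B"
        "(Im (xi y z))\<^sup>2 \<le> B \<and> (Im (xi' y z))\<^sup>2 \<le> B" if "y \<in> {0..pi}" for y
        using xiB[OF z that] unfolding cmod_power2 by (smt (verit) zero_le_power2)+
      note b1 = bessel2[OF Fder(1) cFd(1) FB(1) H(1) HN]
      note b2 = bessel2[OF Fder(2) cFd(2) FB(2) H(1) HN]
      have "sum (aa z) H = (\<Sum>t\<in>H. (t + c) * (p1 z t)\<^sup>2 / k t) + (\<Sum>t\<in>H. (t + c) * (p2 z t)\<^sup>2 / k t)"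
        by (simp add: aa_def sum.distrib[symmetric] add_divide_distrib algebra_simps)
      also have "\<dots> \<le> pi * (2 * B / (pi - a)\<^sup>2 + 2 * B + (M + c) * B) + pi * (2 * B / (pi - a)\<^sup>2 + 2 * B + (M + c) * B)"
        using b1 b2 unfolding p1_def p2_def by (intro add_mono) (simp_all add: mult.assoc)
      finally show "sum (aa z) H \<le> 2 * (pi * (2 * B / (pi - a)\<^sup>2 + 2 * B + (M + c) * B))" by simp
    next
      fix H assume H: "finite H" "H \<subseteq> S"
      show "sum b H \<le> 2" unfolding b_def using H Sneu by (intro bessel1) auto
    qed
    then show "\<exists>g. uniform_limit K
       (\<lambda>F z. \<Sum>t\<in>F. (1 / kpi xi t) *
           cmod (integral {0..pi} (\<lambda>x. xi x z * complex_of_real (Rcut a x) * xi x (complex_of_real t))))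
       g (finite_subsets_at_top (spec_H xi'))"
      unfolding tm_def S_def .
  qed
qed


end
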